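(* Let $(X,d,f)$ be a dynamical system with $f$ uniformly continuous, and let $\mathcal{A}=\{\mathcal{U}_n\}_{n\in\mathbb{N}}$ be a complete tame defining sequence of $(X,d)$. Then $f$ has the shadowing property if and only if $(X,d,f)$ is uniformly conjugate to an inverse limit dynamical system whose associated inverse system consists of a sequence of 1-step shifts on countable alphabets, with uniformly continuous bonding maps, and satisfies the Mittag-Leffler Condition.
   Context: All spaces are nonempty separable metrizable. A dynamical system $(X,d,f)$: admissible metric $d$, continuous $f:X\to X$. A partition of $X$ is a cover by pairwise disjoint nonempty clopen sets. A defining sequence is a sequence $\{\mathcal{U}_n\}$ of partitions, each refining the previous, whose union is a basis of the topology; complete if every nested sequence $U_n\in\mathcal{U}_n$, $U_{n+1}\subseteq U_n$, has nonempty intersection; tame (w.r.t. $d$) if $\sup\{\operatorname{diam}O:O\in\mathcal{U}_n\}\to0$ and each $\mathcal{U}_n$ is $\rho_n$-separated for some $\rho_n>0$ (points in distinct elements are at distance $\ge\rho_n$). Shadowing property: for every $\varepsilon>0$ there is $\delta>0$ such that every infinite sequence $(x_n)$ with $d(f(x_n),x_{n+1})<\delta$ for all $n$ admits $x$ with $d(f^n(x),x_n)<\varepsilon$ for all $n$. A 1-step shift on a countable alphabet $A$ is a closed shift-invariant subset $Y\subseteq A^{\mathbb{N}}$ of the form $Y=\{y: y \text{ contains no word of } F\}$ for a set $F$ of words of length 2, with the shift map $\sigma$ and metric $d(y,z)=1/(i+1)$, $i$ least index with $y_i\ne z_i$. Given dynamical systems $(X_m,d_m,f_m)$ with metrics bounded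 by 1 and continuous bonding maps $g_m:X_{m+1}\to X_m$ with $f_m\circ g_m=g_m\circ f_{m+1}$, the inverse limit dynamical system is $\varprojlim(g_m,X_m)=\{(x_m)\in\prod X_m: x_m=g_m(x_{m+1})\}$ with metric $d_\Pi((x_m),(y_m))=\max_m d_m(x_m,y_m)/(m+1)$ and map the restriction of $\prod_m f_m$. The inverse system satisfies the Mittag-Leffler Condition if for every $N$ there is $k>N$ with $g_N\circ\cdots\circ g_k(X_{k+1})=g_N\circ\cdots\circ g_i(X_{i+1})$ for all $i\ge k$. Dynamical systems $(X,d_1,f)$, $(Y,d_2,g)$ are uniformly conjugate if there is a surjective homeomorphism $h:X\to Y$ with $h,h^{-1}$ uniformly continuous and $h\circ f=g\circ h$. *)

theory Defs
  imports "HOL-Analysis.Analysis"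
begin

definition ucont :: "'a set \<Rightarrow> ('a \<Rightarrow> 'a \<Rightarrow> real) \<Rightarrow> ('b \<Rightarrow> 'b \<Rightarrow> real) \<Rightarrow> ('a \<Rightarrow> 'b) \<Rightarrow> bool" where
  "ucont A dA dB h \<longleftrightarrow>
     (\<forall>e>0. \<exists>\<delta>>0. \<forall>x\<in>A. \<forall>y\<in>A. dA x y < \<delta> \<longrightarrow> dB (h x) (h y) < e)"

definition dyn_sys :: "'a set \<Rightarrow> ('a \<Rightarrow> 'a \<Rightarrow> real) \<Rightarrow> ('a \<Rightarrow> 'a) \<Rightarrow> bool" where
  "dyn_sys X d f \<longleftrightarrow> Metric_space X d \<and> X \<noteq> {} \<and>
     separable_space (Metric_space.mtopology X d) \<and>
     continuous_map (Metric_space.mtopology X d) (Metric_space.mtopology X d) f"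

definition clopen_in :: "'a set \<Rightarrow> ('a \<Rightarrow> 'a \<Rightarrow> real) \<Rightarrow> 'a set \<Rightarrow> bool" where
  "clopen_in X d U \<longleftrightarrow> openin (Metric_space.mtopology X d) U \<and> closedin (Metric_space.mtopology X d) U"

definition is_partition :: "'a set \<Rightarrow> ('a \<Rightarrow> 'a \<Rightarrow> real) \<Rightarrow> 'a set set \<Rightarrow> bool" where
  "is_partition X d P \<longleftrightarrow> (\<forall>U\<in>P. U \<noteq> {} \<and> clopen_in X d U) \<and> \<Union>P = X \<and> pairwise disjnt P"

definition defining_sequence :: "'a set \<Rightarrow> ('a \<Rightarrow> 'a \<Rightarrow> real) \<Rightarrow> (nat \<Rightarrow> 'a set set) \<Rightarrow> bool" where
  "defining_sequence X d \<U> \<longleftrightarrow>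
     (\<forall>n. is_partition X d (\<U> n)) \<and>
     (\<forall>n. \<forall>V\<in>\<U> (Suc n). \<exists>W\<in>\<U> n. V \<subseteq> W) \<and>
     (\<forall>G x. openin (Metric_space.mtopology X d) G \<and> x \<in> G \<longrightarrow>
        (\<exists>V\<in>(\<Union>n. \<U> n). x \<in> V \<and> V \<subseteq> G))"

definition complete_defseq :: "(nat \<Rightarrow> 'a set set) \<Rightarrow> bool" where
  "complete_defseq \<U> \<longleftrightarrow>
     (\<forall>V. (\<forall>n. V n \<in> \<U> n \<and> V (Suc n) \<subseteq> V n) \<longrightarrow> \<Inter>(range V) \<noteq> {})"

definition tame_defseq :: "('a \<Rightarrow> 'a \<Rightarrow> real) \<Rightarrow> (nat \<Rightarrow> 'a set set) \<Rightarrow> bool" where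
  "tame_defseq d \<U> \<longleftrightarrow>
     (\<forall>e>0. \<exists>N. \<forall>n\<ge>N. \<forall>B\<in>\<U> n. \<forall>x\<in>B. \<forall>y\<in>B. d x y < e) \<and>
     (\<forall>n. \<exists>\<rho>>0. \<forall>B\<in>\<U> n. \<forall>BB\<in>\<U> n. B \<noteq> BB \<longrightarrow> (\<forall>x\<in>B. \<forall>y\<in>BB. \<rho> \<le> d x y))"

definition shadowing :: "'a set \<Rightarrow> ('a \<Rightarrow> 'a \<Rightarrow> real) \<Rightarrow> ('a \<Rightarrow> 'a) \<Rightarrow> bool" where
  "shadowing X d f \<longleftrightarrow>
     (\<forall>e>0. \<exists>\<delta>>0. \<forall>xs. (\<forall>n. xs n \<in> X) \<and> (\<forall>n. d (f (xs n)) (xs (Suc n)) < \<delta>) \<longrightarrow>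
        (\<exists>x\<in>X. \<forall>n. d ((f ^^ n) x) (xs n) < e))"

text \<open>Shift spaces over countable alphabets, represented as subsets of nat.\<close>
definition shift_dist :: "(nat \<Rightarrow> nat) \<Rightarrow> (nat \<Rightarrow> nat) \<Rightarrow> real" where
  "shift_dist y z = (if y = z then 0 else 1 / real (Suc (LEAST i. y i \<noteq> z i)))"

definition shift_map :: "(nat \<Rightarrow> nat) \<Rightarrow> (nat \<Rightarrow> nat)" where
  "shift_map y = (\<lambda>i. y (Suc i))"

definition one_step_shift :: "nat set \<Rightarrow> (nat \<times> nat) set \<Rightarrow> (nat \<Rightarrow> nat) set" where
  "one_step_shift A F = {y. (\<forall>i. y i \<in> A) \<and> (\<forall>i. (y i, y (Suc i)) \<notin> F)}"

text \<open>gcomp g N j = g N \<circ> g (N+1) \<circ> ... \<circ> g (N+j), mapping level N+j+1 to level N.\<close>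
fun gcomp :: "(nat \<Rightarrow> 'b \<Rightarrow> 'b) \<Rightarrow> nat \<Rightarrow> nat \<Rightarrow> 'b \<Rightarrow> 'b" where
  "gcomp g N 0 = g N"
| "gcomp g N (Suc j) = gcomp g N j \<circ> g (N + Suc j)"

definition mittag_leffler :: "(nat \<Rightarrow> 'b set) \<Rightarrow> (nat \<Rightarrow> 'b \<Rightarrow> 'b) \<Rightarrow> bool" where
  "mittag_leffler Y g \<longleftrightarrow>
     (\<forall>N. \<exists>k>N. \<forall>i\<ge>k. gcomp g N (k - N) ` Y (Suc k) = gcomp g N (i - N) ` Y (Suc i))"

definition inv_lim :: "(nat \<Rightarrow> 'b set) \<Rightarrow> (nat \<Rightarrow> 'b \<Rightarrow> 'b) \<Rightarrow> (nat \<Rightarrow> 'b) set" where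
  "inv_lim Y g = {x. (\<forall>m. x m \<in> Y m) \<and> (\<forall>m. x m = g m (x (Suc m)))}"

definition inv_lim_dist :: "(nat \<Rightarrow> 'b \<Rightarrow> 'b \<Rightarrow> real) \<Rightarrow> (nat \<Rightarrow> 'b) \<Rightarrow> (nat \<Rightarrow> 'b) \<Rightarrow> real" where
  "inv_lim_dist dm x y = (SUP m. dm m (x m) (y m) / real (Suc m))"

definition inv_lim_map :: "(nat \<Rightarrow> 'b \<Rightarrow> 'b) \<Rightarrow> (nat \<Rightarrow> 'b) \<Rightarrow> (nat \<Rightarrow> 'b)" where
  "inv_lim_map fm x = (\<lambda>m. fm m (x m))"

definition unif_conj :: "'a set \<Rightarrow> ('a \<Rightarrow> 'a \<Rightarrow> real) \<Rightarrow> ('a \<Rightarrow> 'a) \<Rightarrow>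
    'c set \<Rightarrow> ('c \<Rightarrow> 'c \<Rightarrow> real) \<Rightarrow> ('c \<Rightarrow> 'c) \<Rightarrow> bool" where
  "unif_conj X d1 f Y d2 g \<longleftrightarrow>
     (\<exists>h. bij_betw h X Y \<and> ucont X d1 d2 h \<and> ucont Y d2 d1 (inv_into X h) \<and>
          (\<forall>x\<in>X. h (f x) = g (h x)))"

end

theory Submission
  imports Defs
begin

lemma div_suc_le: "0 \<le> (a::real) \<Longrightarrow> a / real (Suc m) \<le> a"
  by (simp add: divide_le_eq mult_le_cancel_left1)

lemma one_divide_less_iff': "1 / real (Suc L) < 1 / real (Suc M) \<longleftrightarrow> M < L"
  by (smt (verit, best) frac_le frac_less2 of_nat_0_less_iff of_nat_less_iff zero_less_Suc Suc_less_eq of_nat_le_iff not_less)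

lemma sd_nonneg: "0 \<le> shift_dist y z"
  by (simp add: shift_dist_def)

lemma sd_le1: "shift_dist y z \<le> 1"
  by (simp add: shift_dist_def)

lemma sd_lt: "shift_dist y z < 1 / real (Suc M) \<longleftrightarrow> (\<forall>i\<le>M. y i = z i)"
proof (cases "y = z")
  case True then show ?thesis by (simp add: shift_dist_def)
next
  case False
  then obtain j where j: "y j \<noteq> z j" by auto
  define L where "L = (LEAST i. y i \<noteq> z i)"
  have L1: "y L \<noteq> z L" unfolding L_def by (rule LeastI[of _ j], rule j)
  have L2: "\<And>i. i < L \<Longrightarrow> y i = z i" unfolding L_def using not_less_Least by blast
  have "shift_dist y z = 1 / real (Suc L)" using False by (simp add: shift_dist_def L_def)
  moreover have "1 / real (Suc L) < 1 / real (Suc M) \<longleftrightarrow> M < L"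
    by (rule one_divide_less_iff')
  moreover have "M < L \<longleftrightarrow> (\<forall>i\<le>M. y i = z i)"
    using L1 L2 by (meson leI le_less_trans order_refl)
  ultimately show ?thesis by simp
qed

lemma sd_agree_lt: "(\<forall>i\<le>M. y i = z i) \<Longrightarrow> shift_dist y z < 1 / real (Suc M)"
  using sd_lt by blast

lemma sd_lt_agree: "shift_dist y z < 1 / real (Suc M) \<Longrightarrow> i \<le> M \<Longrightarrow> y i = z i"
  using sd_lt by blast

lemma ild_term_le:
  "shift_dist (x m) (y m) / real (Suc m) \<le> inv_lim_dist (\<lambda>m. shift_dist) x y"
  unfolding inv_lim_dist_def
proof (rule cSUP_upper)
  show "bdd_above (range (\<lambda>m. shift_dist (x m) (y m) / real (Suc m)))"
  proof (rule bdd_aboveI[of _ 1])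
    fix u assume "u \<in> range (\<lambda>m. shift_dist (x m) (y m) / real (Suc m))"
    then obtain m where u: "u = shift_dist (x m) (y m) / real (Suc m)" by auto
    have "shift_dist (x m) (y m) / real (Suc m) \<le> shift_dist (x m) (y m)"
      using sd_nonneg div_suc_le by blast
    then show "u \<le> 1" using sd_le1[of "x m" "y m"] u by linarith
  qed
qed simp

lemma ild_le:
  assumes "\<And>m. shift_dist (x m) (y m) / real (Suc m) \<le> c"
  shows "inv_lim_dist (\<lambda>m. shift_dist) x y \<le> c"
  unfolding inv_lim_dist_def by (rule cSUP_least) (use assms in auto)

lemma ild_small:
  assumes "\<And>m. m \<le> N \<Longrightarrow> (\<forall>i\<le>N. x m i = y m i)"
  shows "inv_lim_dist (\<lambda>m. shift_dist) x y \<le> 1 / real (Suc N)"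
proof (rule ild_le)
  fix m
  show "shift_dist (x m) (y m) / real (Suc m) \<le> 1 / real (Suc N)"
  proof (cases "m \<le> N")
    case True
    then have "shift_dist (x m) (y m) < 1 / real (Suc N)" using assms sd_agree_lt by blast
    moreover have "shift_dist (x m) (y m) / real (Suc m) \<le> shift_dist (x m) (y m)"
      using sd_nonneg div_suc_le by blast
    ultimately show ?thesis by linarith
  next
    case False
    have "shift_dist (x m) (y m) / real (Suc m) \<le> 1 / real (Suc m)"
      using sd_le1 by (simp add: divide_right_mono)
    also have "\<dots> \<le> 1 / real (Suc N)" using False by (simp add: frac_le)
    finally show ?thesis .
  qed
qed

lemma ucont_comp:
  assumes "ucont A d1 d2 g" "ucont B d0 d1 h" "h ` B \<subseteq> A"
  shows "ucont B d0 d2 (g \<circ> h)"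
  unfolding ucont_def
proof (intro allI impI)
  fix e :: real assume "e > 0"
  then obtain e1 where e1: "e1 > 0" "\<forall>x\<in>A. \<forall>y\<in>A. d1 x y < e1 \<longrightarrow> d2 (g x) (g y) < e"
    using assms(1) unfolding ucont_def by blast
  then obtain e2 where "e2 > 0" "\<forall>x\<in>B. \<forall>y\<in>B. d0 x y < e2 \<longrightarrow> d1 (h x) (h y) < e1"
    using assms(2) unfolding ucont_def by blast
  then show "\<exists>\<delta>>0. \<forall>x\<in>B. \<forall>y\<in>B. d0 x y < \<delta> \<longrightarrow> d2 ((g \<circ> h) x) ((g \<circ> h) y) < e"
    using e1 assms(3) by (auto intro!: exI[of _ e2]) (meson image_subset_iff)
qed

lemma shift_in: "y \<in> one_step_shift A F \<Longrightarrow> shift_map y \<in> one_step_shift A F"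
  by (simp add: one_step_shift_def shift_map_def)

lemma shift_pow: "(shift_map ^^ n) y = (\<lambda>i. y (n + i))"
  by (induction n arbitrary: y) (auto simp: shift_map_def funpow_Suc_right)

lemma shift_pow_in: "y \<in> one_step_shift A F \<Longrightarrow> (shift_map ^^ n) y \<in> one_step_shift A F"
  by (induction n) (auto simp: shift_in)

lemma transport_shadowing:
  assumes uc: "unif_conj X d f Y d2 s" and fX: "f ` X \<subseteq> X"
    and sh: "shadowing Y d2 s"
  shows "shadowing X d f"
proof -
  obtain h where bij: "bij_betw h X Y" and uh: "ucont X d d2 h"
    and ui: "ucont Y d2 d (inv_into X h)" and cj: "\<forall>x\<in>X. h (f x) = s (h x)"
    using uc unfolding unif_conj_def by blast
  have fpX: "(f ^^ n) x \<in> X" if "x \<in> X" for n x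
    using that fX by (induction n) auto
  have hpow: "h ((f ^^ n) x) = (s ^^ n) (h x)" if "x \<in> X" for n x
    using that by (induction n) (auto simp: cj fpX)
  have inj: "inj_on h X" and img: "h ` X = Y" using bij unfolding bij_betw_def by auto
  show ?thesis unfolding shadowing_def
  proof (intro allI impI)
    fix e :: real assume "e > 0"
    then obtain e1 where e1: "e1 > 0" "\<forall>x\<in>Y. \<forall>y\<in>Y. d2 x y < e1 \<longrightarrow> d (inv_into X h x) (inv_into X h y) < e"
      using ui unfolding ucont_def by blast
    then obtain d1 where d1: "d1 > 0" "\<forall>xs. (\<forall>n. xs n \<in> Y) \<and> (\<forall>n. d2 (s (xs n)) (xs (Suc n)) < d1) \<longrightarrow>
        (\<exists>x\<in>Y. \<forall>n. d2 ((s ^^ n) x) (xs n) < e1)"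
      using sh unfolding shadowing_def by blast
    then obtain d0 where d0: "d0 > 0" "\<forall>x\<in>X. \<forall>y\<in>X. d x y < d0 \<longrightarrow> d2 (h x) (h y) < d1"
      using uh unfolding ucont_def by blast
    show "\<exists>\<delta>>0. \<forall>xs. (\<forall>n. xs n \<in> X) \<and> (\<forall>n. d (f (xs n)) (xs (Suc n)) < \<delta>) \<longrightarrow>
        (\<exists>x\<in>X. \<forall>n. d ((f ^^ n) x) (xs n) < e)"
    proof (intro exI[of _ d0] conjI allI impI)
      fix xs assume xs: "(\<forall>n. xs n \<in> X) \<and> (\<forall>n. d (f (xs n)) (xs (Suc n)) < d0)"
      have "\<forall>n. h (xs n) \<in> Y" using xs img by auto
      moreover have "\<forall>n. d2 (s (h (xs n))) (h (xs (Suc n))) < d1"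
      proof
        fix n
        have "f (xs n) \<in> X" using xs fX by auto
        then have "d2 (h (f (xs n))) (h (xs (Suc n))) < d1" using xs d0 by blast
        then show "d2 (s (h (xs n))) (h (xs (Suc n))) < d1" using cj xs by metis
      qed
      ultimately have "\<exists>y\<in>Y. \<forall>n. d2 ((s ^^ n) y) (h (xs n)) < e1"
        using d1(2)[rule_format, of "\<lambda>n. h (xs n)"] by simp
      then obtain y where y: "y \<in> Y" "\<forall>n. d2 ((s ^^ n) y) (h (xs n)) < e1"
        by blast
      define x where "x = inv_into X h y"
      have x: "x \<in> X" "h x = y" using y(1) img unfolding x_def
        by (auto intro: inv_into_into f_inv_into_f)
      show "\<exists>x\<in>X. \<forall>n. d ((f ^^ n) x) (xs n) < e"
      proof (intro bexI[OF _ x(1)] allI)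
        fix n
        have hn: "h ((f ^^ n) x) = (s ^^ n) y" using hpow x by simp
        have i1: "h ((f ^^ n) x) \<in> Y" using fpX[OF x(1)] img by blast
        have i2: "h (xs n) \<in> Y" using xs img by blast
        have "d2 (h ((f ^^ n) x)) (h (xs n)) < e1" using hn y by simp
        then have "d (inv_into X h (h ((f ^^ n) x))) (inv_into X h (h (xs n))) < e"
          using e1(2) i1 i2 by blast
        moreover have "inv_into X h (h ((f ^^ n) x)) = (f ^^ n) x"
          using inj fpX[OF x(1)] by (rule inv_into_f_f)
        moreover have "inv_into X h (h (xs n)) = xs n"
          using inj xs by (simp add: inv_into_f_f)
        ultimately show "d ((f ^^ n) x) (xs n) < e" by simp
      qed
    next
      show "d0 > 0" by (rule d0(1))
    qed
  qed
qed

locale ILS =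
  fixes A :: "nat \<Rightarrow> nat set" and F :: "nat \<Rightarrow> (nat \<times> nat) set"
    and g :: "nat \<Rightarrow> (nat \<Rightarrow> nat) \<Rightarrow> (nat \<Rightarrow> nat)"
  assumes maps: "\<And>m. g m ` one_step_shift (A (Suc m)) (F (Suc m)) \<subseteq> one_step_shift (A m) (F m)"
    and uc: "\<And>m. ucont (one_step_shift (A (Suc m)) (F (Suc m))) shift_dist shift_dist (g m)"
    and cm: "\<And>m. \<forall>y\<in>one_step_shift (A (Suc m)) (F (Suc m)). shift_map (g m y) = g m (shift_map y)"
    and ml: "mittag_leffler (\<lambda>m. one_step_shift (A m) (F m)) g"
begin

abbreviation "Y m \<equiv> one_step_shift (A m) (F m)"
abbreviation "IL \<equiv> inv_lim (\<lambda>m. one_step_shift (A m) (F m)) g"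
abbreviation "ild \<equiv> inv_lim_dist (\<lambda>m. shift_dist)"
abbreviation "sig \<equiv> inv_lim_map (\<lambda>m. shift_map)"

lemma gmaps: "y \<in> Y (Suc m) \<Longrightarrow> g m y \<in> Y m"
  using maps by blast

lemma gc_maps: "y \<in> Y (Suc (N + j)) \<Longrightarrow> gcomp g N j y \<in> Y N"
proof (induction j arbitrary: y)
  case 0 then show ?case by (simp add: gmaps)
next
  case (Suc j) then show ?case by (simp add: gmaps)
qed

lemma gc_uc: "ucont (Y (Suc (N + j))) shift_dist shift_dist (gcomp g N j)"
proof (induction j)
  case 0 then show ?case by (simp add: uc)
next
  case (Suc j)
  have "ucont (Y (Suc (N + Suc j))) shift_dist shift_dist (gcomp g N j \<circ> g (N + Suc j))"
    by (rule ucont_comp[OF Suc.IH uc]) (use maps in simp)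
  then show ?case by (simp add: comp_def)
qed

lemma gc_cm: "y \<in> Y (Suc (N + j)) \<Longrightarrow> shift_map (gcomp g N j y) = gcomp g N j (shift_map y)"
proof (induction j arbitrary: y)
  case 0 then show ?case by (simp add: cm)
next
  case (Suc j)
  have "g (N + Suc j) y \<in> Y (Suc (N + j))" using Suc.prems gmaps by simp
  then show ?case using Suc cm by simp
qed

lemma gc_cm_pow: "y \<in> Y (Suc (N + j)) \<Longrightarrow> (shift_map ^^ n) (gcomp g N j y) = gcomp g N j ((shift_map ^^ n) y)"
proof (induction n)
  case 0 then show ?case by simp
next
  case (Suc n)
  have "(shift_map ^^ n) y \<in> Y (Suc (N + j))" using Suc.prems shift_pow_in by blast
  then have "shift_map (gcomp g N j ((shift_map ^^ n) y)) = gcomp g N j (shift_map ((shift_map ^^ n) y))"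
    by (rule gc_cm)
  then show ?case using Suc.IH[OF Suc.prems] by simp
qed

lemma gc_left: "g N \<circ> gcomp g (Suc N) j = gcomp g N (Suc j)"
proof (induction j)
  case 0 then show ?case by simp
next
  case (Suc j)
  have "gcomp g N (Suc (Suc j)) = gcomp g N (Suc j) \<circ> g (Suc N + Suc j)" by simp
  also have "\<dots> = (g N \<circ> gcomp g (Suc N) j) \<circ> g (Suc N + Suc j)" by (simp only: Suc.IH)
  also have "\<dots> = g N \<circ> (gcomp g (Suc N) j \<circ> g (Suc N + Suc j))" by (simp only: comp_assoc)
  also have "\<dots> = g N \<circ> gcomp g (Suc N) (Suc j)" by simp
  finally show ?case by simp
qed

lemma IL_Y: "x \<in> IL \<Longrightarrow> x m \<in> Y m"
  unfolding inv_lim_def by blast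

lemma IL_g: "x \<in> IL \<Longrightarrow> x m = g m (x (Suc m))"
  unfolding inv_lim_def by blast

lemma IL_I: "(\<And>m. x m \<in> Y m) \<Longrightarrow> (\<And>m. x m = g m (x (Suc m))) \<Longrightarrow> x \<in> IL"
  unfolding inv_lim_def by blast

lemma IL_coord: "x \<in> IL \<Longrightarrow> x N = gcomp g N j (x (Suc (N + j)))"
proof (induction j)
  case 0 then show ?case using IL_g[of x N] by simp
next
  case (Suc j)
  have "x (Suc (N + j)) = g (Suc (N + j)) (x (Suc (Suc (N + j))))"
    using Suc.prems by (rule IL_g)
  then show ?case using Suc.IH[OF Suc.prems] by simp
qed

definition "KK N = (SOME k. k > N \<and> (\<forall>i\<ge>k. gcomp g N (k - N) ` Y (Suc k) = gcomp g N (i - N) ` Y (Suc i)))"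
definition "SS N = gcomp g N (KK N - N) ` Y (Suc (KK N))"

lemma KK: "KK N > N" "\<And>i. i \<ge> KK N \<Longrightarrow> SS N = gcomp g N (i - N) ` Y (Suc i)"
proof -
  have "\<exists>k. k > N \<and> (\<forall>i\<ge>k. gcomp g N (k - N) ` Y (Suc k) = gcomp g N (i - N) ` Y (Suc i))"
    using ml unfolding mittag_leffler_def by blast
  then have "KK N > N \<and> (\<forall>i\<ge>KK N. gcomp g N (KK N - N) ` Y (Suc (KK N)) = gcomp g N (i - N) ` Y (Suc i))"
    unfolding KK_def by (rule someI_ex)
  then show "KK N > N" "\<And>i. i \<ge> KK N \<Longrightarrow> SS N = gcomp g N (i - N) ` Y (Suc i)"
    unfolding SS_def by auto
qed

lemma SS_sub: "SS N \<subseteq> Y N"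
proof -
  have "Suc (N + (KK N - N)) = Suc (KK N)" using KK(1)[of N] by simp
  then show ?thesis unfolding SS_def using gc_maps[of _ N "KK N - N"] by auto
qed

lemma SS_onto: "g N ` SS (Suc N) = SS N"
proof -
  define i where "i = max (KK N) (KK (Suc N))"
  have i1: "i \<ge> KK N" "i \<ge> KK (Suc N)" unfolding i_def by auto
  have i2: "i > Suc N" using KK(1)[of "Suc N"] i1 by simp
  have "g N ` SS (Suc N) = g N ` (gcomp g (Suc N) (i - Suc N) ` Y (Suc i))"
    using KK(2)[OF i1(2)] by simp
  also have "\<dots> = (g N \<circ> gcomp g (Suc N) (i - Suc N)) ` Y (Suc i)" by (simp add: image_comp)
  also have "\<dots> = gcomp g N (Suc (i - Suc N)) ` Y (Suc i)" by (simp add: gc_left)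
  also have "Suc (i - Suc N) = i - N" using i2 by simp
  also have "gcomp g N (i - N) ` Y (Suc i) = SS N" using KK(2)[OF i1(1)] by simp
  finally show ?thesis .
qed

lemma lift:
  assumes w: "w \<in> SS N"
  shows "\<exists>x\<in>IL. x N = w"
proof -
  define L where "L = rec_nat w (\<lambda>j v. SOME u. u \<in> SS (Suc (N + j)) \<and> g (N + j) u = v)"
  have L0: "L 0 = w" unfolding L_def by simp
  have LS: "L (Suc j) = (SOME u. u \<in> SS (Suc (N + j)) \<and> g (N + j) u = L j)" for j
    unfolding L_def by simp
  have step: "\<exists>u. u \<in> SS (Suc (N + j)) \<and> g (N + j) u = v" if "v \<in> SS (N + j)" for j v
  proof -
    have "v \<in> g (N + j) ` SS (Suc (N + j))" using SS_onto[of "N + j"] that by simp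
    then show ?thesis by blast
  qed
  have L1: "L j \<in> SS (N + j)" for j
  proof (induction j)
    case 0 then show ?case using L0 w by simp
  next
    case (Suc j)
    have "L (Suc j) \<in> SS (Suc (N + j)) \<and> g (N + j) (L (Suc j)) = L j"
      unfolding LS by (rule someI_ex[OF step[OF Suc.IH]])
    then show ?case by simp
  qed
  have L2: "g (N + j) (L (Suc j)) = L j" for j
  proof -
    have "L (Suc j) \<in> SS (Suc (N + j)) \<and> g (N + j) (L (Suc j)) = L j"
      unfolding LS by (rule someI_ex[OF step[OF L1]])
    then show ?thesis by simp
  qed
  define D where "D = rec_nat w (\<lambda>j v. g (N - Suc j) v)"
  have D0: "D 0 = w" and DS: "D (Suc j) = g (N - Suc j) (D j)" for j unfolding D_def by simp_all
  have D: "j \<le> N \<Longrightarrow> D j \<in> SS (N - j)" for j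
  proof (induction j)
    case 0 then show ?case using D0 w by simp
  next
    case (Suc j)
    then have "D j \<in> SS (Suc (N - Suc j))" by (simp add: Suc_diff_Suc)
    then show ?case using DS SS_onto by blast
  qed
  define x where "x m = (if m \<le> N then D (N - m) else L (m - N))" for m
  have xS: "x m \<in> SS m" for m
  proof (cases "m \<le> N")
    case True
    then have "D (N - m) \<in> SS (N - (N - m))" using D[of "N - m"] by simp
    then show ?thesis using True by (simp add: x_def)
  next
    case False
    then have "L (m - N) \<in> SS (N + (m - N))" using L1[of "m - N"] by simp
    then show ?thesis using False by (simp add: x_def)
  qed
  have xg: "x m = g m (x (Suc m))" for m
  proof (cases "m < N")
    case True
    then have "N - m = Suc (N - Suc m)" by simp
    moreover have "N - Suc (N - Suc m) = m" using True by simp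
    ultimately have "D (N - m) = g m (D (N - Suc m))" using DS[of "N - Suc m"] by simp
    then show ?thesis using True by (simp add: x_def)
  next
    case False
    then have m: "m \<ge> N" by simp
    have "L (m - N) = g m (L (Suc m - N))"
      using L2[of "m - N"] m by (simp add: Suc_diff_le)
    then show ?thesis using m D0 L0 by (auto simp: x_def)
  qed
  have "x \<in> IL" using xS SS_sub xg by (intro IL_I) blast+
  moreover have "x N = w" using D0 by (simp add: x_def)
  ultimately show ?thesis by blast
qed

lemma sig_in: "x \<in> IL \<Longrightarrow> sig x \<in> IL"
proof (rule IL_I)
  fix m assume x: "x \<in> IL"
  show "sig x m \<in> Y m" unfolding inv_lim_map_def using shift_in IL_Y[OF x] by blast
  have "shift_map (x m) = shift_map (g m (x (Suc m)))" using IL_g[OF x] by metis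
  also have "\<dots> = g m (shift_map (x (Suc m)))" using cm IL_Y[OF x] by blast
  finally show "sig x m = g m (sig x (Suc m))" unfolding inv_lim_map_def .
qed

lemma sig_pow: "(sig ^^ n) x = (\<lambda>m. (shift_map ^^ n) (x m))"
  by (induction n) (auto simp: inv_lim_map_def)

lemma sig_pow_in: "x \<in> IL \<Longrightarrow> (sig ^^ n) x \<in> IL"
  by (induction n) (auto simp: sig_in)

lemma coord_lemma:
  "\<forall>e>0. \<exists>\<eta>>0. \<forall>a\<in>IL. \<forall>b\<in>IL. shift_dist (a N) (b N) < \<eta> \<longrightarrow> (\<forall>m\<le>N. shift_dist (a m) (b m) < e)"
proof (induction N)
  case 0 then show ?case by auto
next
  case (Suc N)
  show ?case
  proof (intro allI impI)
    fix e :: real assume e: "e > 0"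
    obtain \<eta>0 where h0: "\<eta>0 > 0" "\<forall>a\<in>IL. \<forall>b\<in>IL. shift_dist (a N) (b N) < \<eta>0 \<longrightarrow> (\<forall>m\<le>N. shift_dist (a m) (b m) < e)"
      using Suc e by blast
    obtain \<eta>1 where h1: "\<eta>1 > 0" "\<forall>x\<in>Y (Suc N). \<forall>y\<in>Y (Suc N). shift_dist x y < \<eta>1 \<longrightarrow> shift_dist (g N x) (g N y) < \<eta>0"
      using uc[of N] h0 unfolding ucont_def by blast
    show "\<exists>\<eta>>0. \<forall>a\<in>IL. \<forall>b\<in>IL. shift_dist (a (Suc N)) (b (Suc N)) < \<eta> \<longrightarrow> (\<forall>m\<le>Suc N. shift_dist (a m) (b m) < e)"
    proof (intro exI[of _ "min e \<eta>1"] conjI ballI impI allI)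
      fix a b m assume ab: "a \<in> IL" "b \<in> IL" "shift_dist (a (Suc N)) (b (Suc N)) < min e \<eta>1" "m \<le> Suc N"
      have "a (Suc N) \<in> Y (Suc N)" "b (Suc N) \<in> Y (Suc N)" "a N = g N (a (Suc N))" "b N = g N (b (Suc N))"
        using ab IL_Y IL_g by blast+
      then have "shift_dist (a N) (b N) < \<eta>0" using h1 ab by auto
      then have "\<forall>m\<le>N. shift_dist (a m) (b m) < e" using h0 ab by blast
      then show "shift_dist (a m) (b m) < e" using ab by (cases "m = Suc N") auto
    qed (use e h1 in auto)
  qed
qed

lemma IL_shadowing: "shadowing IL ild sig"
  unfolding shadowing_def
proof (intro allI impI)
  fix e :: real assume e: "e > 0"
  obtain N where N: "1 / real (Suc N) < e"
    using e by (metis nat_approx_posE)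
  have "\<exists>\<eta>>0. \<forall>a\<in>IL. \<forall>b\<in>IL. shift_dist (a N) (b N) < \<eta> \<longrightarrow> (\<forall>m\<le>N. shift_dist (a m) (b m) < 1 / real (Suc N))"
    using coord_lemma[of N, THEN spec, of "1 / real (Suc N)"] by simp
  then obtain \<eta> where eta: "\<eta> > 0" "\<forall>a\<in>IL. \<forall>b\<in>IL. shift_dist (a N) (b N) < \<eta> \<longrightarrow> (\<forall>m\<le>N. shift_dist (a m) (b m) < 1 / real (Suc N))"
    by blast
  define K where "K = KK N"
  have KN: "K > N" using KK(1) K_def by simp
  have KS: "Suc (N + (K - N)) = Suc K" using KN by simp
  obtain \<theta> where th: "\<theta> > 0" "\<forall>x\<in>Y (Suc K). \<forall>y\<in>Y (Suc K). shift_dist x y < \<theta> \<longrightarrow> shift_dist (gcomp g N (K - N) x) (gcomp g N (K - N) y) < \<eta>"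
    using gc_uc[of N "K - N"] eta unfolding ucont_def KS by blast
  obtain R where R: "1 / real (Suc R) < \<theta>"
    using th by (metis nat_approx_posE)
  define \<delta> where "\<delta> = 1 / real (Suc R) / real (Suc (Suc K))"
  show "\<exists>\<delta>>0. \<forall>xs. (\<forall>n. xs n \<in> IL) \<and> (\<forall>n. ild (sig (xs n)) (xs (Suc n)) < \<delta>) \<longrightarrow>
        (\<exists>x\<in>IL. \<forall>n. ild ((sig ^^ n) x) (xs n) < e)"
  proof (intro exI[of _ \<delta>] conjI allI impI)
    show "\<delta> > 0" unfolding \<delta>_def by simp
    fix Q assume Q: "(\<forall>n. Q n \<in> IL) \<and> (\<forall>n. ild (sig (Q n)) (Q (Suc n)) < \<delta>)"
    define q where "q n = Q n (Suc K)" for n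
    have qY: "q n \<in> Y (Suc K)" for n using Q IL_Y unfolding q_def by blast
    have "shift_dist (shift_map (q n)) (q (Suc n)) / real (Suc (Suc K)) < \<delta>" for n
    proof -
      have "sig (Q n) (Suc K) = shift_map (q n)" by (simp add: inv_lim_map_def q_def)
      moreover have "Q (Suc n) (Suc K) = q (Suc n)" by (simp add: q_def)
      moreover have "ild (sig (Q n)) (Q (Suc n)) < \<delta>" using Q by blast
      ultimately show ?thesis using ild_term_le[of "sig (Q n)" "Suc K" "Q (Suc n)"] by simp
    qed
    then have sdq: "shift_dist (shift_map (q n)) (q (Suc n)) < 1 / real (Suc R)" for n
      unfolding \<delta>_def by (simp only: divide_less_cancel)
    have agr: "i \<le> R \<Longrightarrow> q n (Suc i) = q (Suc n) i" for n i
    proof -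
      assume "i \<le> R"
      then have "shift_map (q n) i = q (Suc n) i" using sd_lt_agree[OF sdq] by blast
      then show ?thesis by (simp add: shift_map_def)
    qed
    have chain: "i + j \<le> Suc R \<Longrightarrow> q (n + j) i = q n (i + j)" for i j n
    proof (induction j arbitrary: i)
      case 0 then show ?case by simp
    next
      case (Suc j)
      have "q (n + Suc j) i = q (n + j) (Suc i)" using agr[of i "n + j"] Suc.prems by simp
      also have "\<dots> = q n (Suc i + j)" using Suc by simp
      finally show ?case by simp
    qed
    define z where "z n = q n 0" for n
    have zY: "z \<in> Y (Suc K)"
      unfolding one_step_shift_def
    proof (intro CollectI conjI allI)
      fix i
      show "z i \<in> A (Suc K)" using qY[of i] unfolding z_def one_step_shift_def by blast
      have "(q i 0, q i (Suc 0)) \<notin> F (Suc K)" using qY[of i] unfolding one_step_shift_def by blast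
      then show "(z i, z (Suc i)) \<notin> F (Suc K)" using agr[of 0 i] unfolding z_def by simp
    qed
    have zsh: "(shift_map ^^ n) z \<in> Y (Suc K)" for n using zY shift_pow_in by blast
    have zq: "shift_dist ((shift_map ^^ n) z) (q n) < \<theta>" for n
    proof -
      have "\<forall>j\<le>R. (shift_map ^^ n) z j = q n j"
      proof (intro allI impI)
        fix j assume "j \<le> R"
        then have "q (n + j) 0 = q n (0 + j)" using chain[of 0 j n] by simp
        then show "(shift_map ^^ n) z j = q n j" unfolding shift_pow z_def by simp
      qed
      then have "shift_dist ((shift_map ^^ n) z) (q n) < 1 / real (Suc R)" by (rule sd_agree_lt)
      then show ?thesis using R by linarith
    qed
    define w where "w = gcomp g N (K - N) z"
    have "w \<in> SS N" unfolding w_def SS_def K_def[symmetric] using zY by simp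
    then obtain x where x: "x \<in> IL" "x N = w" using lift by blast
    show "\<exists>x\<in>IL. \<forall>n. ild ((sig ^^ n) x) (Q n) < e"
    proof (intro bexI[OF _ x(1)] allI)
      fix n
      have xn: "(sig ^^ n) x \<in> IL" using sig_pow_in x by blast
      have "(sig ^^ n) x N = gcomp g N (K - N) ((shift_map ^^ n) z)"
        unfolding sig_pow x(2) w_def using gc_cm_pow[of z N "K - N" n] zY KS by simp
      moreover have "Q n N = gcomp g N (K - N) (q n)"
        unfolding q_def using IL_coord[of "Q n" N "K - N"] Q KS by simp
      ultimately have "shift_dist ((sig ^^ n) x N) (Q n N) < \<eta>"
        using th zsh qY zq by simp
      then have small: "\<forall>m\<le>N. shift_dist ((sig ^^ n) x m) (Q n m) < 1 / real (Suc N)"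
        using eta xn Q by blast
      have "ild ((sig ^^ n) x) (Q n) \<le> 1 / real (Suc N)"
      proof (rule ild_small)
        fix m assume "m \<le> N"
        then show "\<forall>i\<le>N. (sig ^^ n) x m i = Q n m i"
          using small sd_lt by blast
      qed
      then show "ild ((sig ^^ n) x) (Q n) < e" using N by linarith
    qed
  qed
qed

end

locale DS = Metric_space X d for X :: "'a set" and d +
  fixes f :: "'a \<Rightarrow> 'a" and U :: "nat \<Rightarrow> 'a set set"
  assumes Xne: "X \<noteq> {}"
    and sep: "separable_space mtopology"
    and fX: "f ` X \<subseteq> X"
    and ucf: "ucont X d d f"
    and ds: "defining_sequence X d U"
    and cds: "complete_defseq U"
    and tds: "tame_defseq d U"
    and sh: "shadowing X d f"
begin

lemma fX': "x \<in> X \<Longrightarrow> f x \<in> X" using fX by blast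

lemma fpX: "x \<in> X \<Longrightarrow> (f ^^ n) x \<in> X"
  by (induction n) (auto simp: fX')

lemma part: "is_partition X d (U n)" using ds unfolding defining_sequence_def by blast

lemma U_sub: "V \<in> U n \<Longrightarrow> V \<subseteq> X"
  using part[of n] unfolding is_partition_def by blast

lemma U_open: "V \<in> U n \<Longrightarrow> openin mtopology V"
  using part[of n] unfolding is_partition_def clopen_in_def by blast

lemma U_cover: "x \<in> X \<Longrightarrow> \<exists>V\<in>U n. x \<in> V"
  using part[of n] unfolding is_partition_def by blast

lemma U_disj: "V \<in> U n \<Longrightarrow> W \<in> U n \<Longrightarrow> x \<in> V \<Longrightarrow> x \<in> W \<Longrightarrow> V = W"
  using part[of n] unfolding is_partition_def pairwise_def disjnt_def by blast

definition "cell n x = (SOME V. V \<in> U n \<and> x \<in> V)"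

lemma cell: "x \<in> X \<Longrightarrow> cell n x \<in> U n \<and> x \<in> cell n x"
  unfolding cell_def using U_cover[of x n] by (metis (mono_tags, lifting) someI_ex)

lemma cell_unique: "V \<in> U n \<Longrightarrow> x \<in> V \<Longrightarrow> cell n x = V"
proof -
  assume a: "V \<in> U n" "x \<in> V"
  then have "x \<in> X" using U_sub by blast
  then have "cell n x \<in> U n" "x \<in> cell n x" using cell by blast+
  then show ?thesis using U_disj[OF _ a(1) _ a(2)] by blast
qed

lemma cell_X: "x \<in> X \<Longrightarrow> cell n x \<subseteq> X"
  using cell[of x n] U_sub by blast

lemma cell_eq: "x \<in> X \<Longrightarrow> y \<in> cell n x \<Longrightarrow> cell n y = cell n x"
proof -
  assume "x \<in> X" "y \<in> cell n x"
  then show ?thesis using cell[of x n] cell_unique[of "cell n x" n y] by blast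
qed

lemma refine1: "x \<in> X \<Longrightarrow> cell (Suc n) x \<subseteq> cell n x"
proof -
  assume x: "x \<in> X"
  have "\<forall>V\<in>U (Suc n). \<exists>W\<in>U n. V \<subseteq> W" using ds unfolding defining_sequence_def by blast
  then obtain W where W: "W \<in> U n" "cell (Suc n) x \<subseteq> W" using cell[OF x, of "Suc n"] by blast
  then have "x \<in> W" using cell[OF x, of "Suc n"] by blast
  then have "W = cell n x" using cell_unique W by simp
  then show ?thesis using W by simp
qed

lemma refine: "n \<le> n' \<Longrightarrow> x \<in> X \<Longrightarrow> cell n' x \<subseteq> cell n x"
proof -
  assume x: "x \<in> X" and nn: "n \<le> n'"
  show ?thesis using nn
  proof (induction n' rule: dec_induct)
    case base then show ?case by simp
  next
    case (step k)
    have "cell (Suc k) x \<subseteq> cell k x" using x by (rule refine1)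
    then show ?case using step.IH by (rule subset_trans)
  qed
qed

lemma same_coarse: "n \<le> n' \<Longrightarrow> x \<in> X \<Longrightarrow> y \<in> X \<Longrightarrow> cell n' x = cell n' y \<Longrightarrow> cell n x = cell n y"
proof -
  assume a: "n \<le> n'" "x \<in> X" "y \<in> X" "cell n' x = cell n' y"
  have "y \<in> cell n' y" using a(3) cell by blast
  then have "y \<in> cell n' x" using a(4) by simp
  then have "y \<in> cell n x" using refine[OF a(1) a(2)] by blast
  then have "cell n y = cell n x" using cell_eq[OF a(2)] by blast
  then show ?thesis by simp
qed

lemma dense_ex: "\<exists>D::nat \<Rightarrow> 'a. (\<forall>j. D j \<in> X) \<and> (\<forall>V. openin mtopology V \<and> V \<noteq> {} \<longrightarrow> (\<exists>j. D j \<in> V))"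
proof -
  obtain C where C: "countable C" "C \<subseteq> X" "mtopology closure_of C = X"
    using sep unfolding separable_space_def topspace_mtopology by blast
  have Cne: "C \<noteq> {}"
  proof
    assume "C = {}"
    then have "mtopology closure_of C = {}" by simp
    then show False using C(3) Xne by simp
  qed
  have 1: "\<forall>j. from_nat_into C j \<in> X" using from_nat_into[OF Cne] C(2) by blast
  have 2: "\<exists>j. from_nat_into C j \<in> V" if V: "openin mtopology V" "V \<noteq> {}" for V
  proof -
    obtain x where x: "x \<in> V" using V by blast
    have "V \<subseteq> X" using openin_subset[OF V(1)] by simp
    then have "x \<in> X" using x by blast
    then have "x \<in> mtopology closure_of C" using C(3) by simp
    then have "\<exists>y. y \<in> C \<and> y \<in> V" using x V(1) unfolding in_closure_of by blast
    then obtain y where "y \<in> C" "y \<in> V" by blast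
    moreover obtain j where "from_nat_into C j = y" using from_nat_into_surj[OF C(1) \<open>y \<in> C\<close>] by blast
    ultimately show ?thesis by blast
  qed
  show ?thesis
    by (rule exI[of _ "from_nat_into C"]) (use 1 2 in blast)
qed

definition "Dn = (SOME D::nat \<Rightarrow> 'a. (\<forall>j. D j \<in> X) \<and> (\<forall>V. openin mtopology V \<and> V \<noteq> {} \<longrightarrow> (\<exists>j. D j \<in> V)))"

lemma Dn0: "(\<forall>j. Dn j \<in> X) \<and> (\<forall>V. openin mtopology V \<and> V \<noteq> {} \<longrightarrow> (\<exists>j. Dn j \<in> V))"
  unfolding Dn_def by (rule someI_ex[OF dense_ex])

lemma Dn: "Dn j \<in> X" "openin mtopology V \<Longrightarrow> V \<noteq> {} \<Longrightarrow> \<exists>j. Dn j \<in> V"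
proof -
  show "Dn j \<in> X" using Dn0 by blast
  assume "openin mtopology V" "V \<noteq> {}"
  then show "\<exists>j. Dn j \<in> V" using Dn0 by blast
qed

lemma Dn_cell: "x \<in> X \<Longrightarrow> \<exists>j. Dn j \<in> cell n x"
proof -
  assume x: "x \<in> X"
  have "openin mtopology (cell n x)" using U_open cell[OF x] by blast
  moreover have "cell n x \<noteq> {}" using cell[OF x] by blast
  ultimately show ?thesis by (rule Dn(2))
qed

definition "pp M = (LEAST n. M \<le> n \<and> (\<forall>n'\<ge>n. \<forall>B\<in>U n'. \<forall>x\<in>B. \<forall>y\<in>B. d x y < 1 / real (Suc M)))"

abbreviation "PP M n \<equiv> M \<le> n \<and> (\<forall>n'\<ge>n. \<forall>B\<in>U n'. \<forall>x\<in>B. \<forall>y\<in>B. d x y < 1 / real (Suc M))"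

lemma pp_ex: "\<exists>n. PP M n"
proof -
  have pos: "1 / real (Suc M) > 0" by simp
  have T: "\<forall>e>0. \<exists>N. \<forall>n\<ge>N. \<forall>B\<in>U n. \<forall>x\<in>B. \<forall>y\<in>B. d x y < e"
    using tds unfolding tame_defseq_def by (rule conjunct1)
  obtain N where N: "\<forall>n\<ge>N. \<forall>B\<in>U n. \<forall>x\<in>B. \<forall>y\<in>B. d x y < 1 / real (Suc M)"
    using T[rule_format, OF pos] by (elim exE)
  have "PP M (max N M)"
  proof (intro conjI allI impI ballI)
    show "M \<le> max N M" by simp
    fix n' B x y assume "max N M \<le> n'" "B \<in> U n'" "x \<in> B" "y \<in> B"
    then show "d x y < 1 / real (Suc M)" using N by (meson max.boundedE)
  qed
  then show ?thesis by (rule exI)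
qed

lemma pp0: "PP M (pp M)"
  unfolding pp_def by (rule LeastI_ex[OF pp_ex])

lemma pp: "M \<le> pp M" "n' \<ge> pp M \<Longrightarrow> B \<in> U n' \<Longrightarrow> x \<in> B \<Longrightarrow> y \<in> B \<Longrightarrow> d x y < 1 / real (Suc M)"
proof -
  show "M \<le> pp M" using pp0 by (rule conjunct1)
  assume "n' \<ge> pp M" "B \<in> U n'" "x \<in> B" "y \<in> B"
  then show "d x y < 1 / real (Suc M)" using pp0[of M, THEN conjunct2, rule_format] by simp
qed

lemma pp_mono: "M \<le> M' \<Longrightarrow> pp M \<le> pp M'"
proof -
  assume a: "M \<le> M'"
  have le: "1 / real (Suc M') \<le> 1 / real (Suc M)" using a by (simp add: frac_le)
  have "PP M (pp M')"
  proof (intro conjI allI impI ballI)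
    show "M \<le> pp M'" using pp(1)[of M'] a by simp
    fix n' B x y assume "pp M' \<le> n'" "B \<in> U n'" "x \<in> B" "y \<in> B"
    then have "d x y < 1 / real (Suc M')" by (rule pp(2))
    then show "d x y < 1 / real (Suc M)" using le by linarith
  qed
  then show ?thesis unfolding pp_def[of M] by (rule Least_le)
qed

definition "code M x = (LEAST j. Dn j \<in> cell (pp M) x)"

lemma code: "x \<in> X \<Longrightarrow> Dn (code M x) \<in> cell (pp M) x"
  unfolding code_def using Dn_cell by (rule LeastI_ex)

lemma code_iff: "x \<in> X \<Longrightarrow> y \<in> X \<Longrightarrow> code M x = code M y \<longleftrightarrow> cell (pp M) x = cell (pp M) y"
proof
  assume x: "x \<in> X" "y \<in> X" and e: "code M x = code M y"
  have "cell (pp M) (Dn (code M x)) = cell (pp M) x" using cell_eq[OF x(1) code[OF x(1)]] .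
  moreover have "cell (pp M) (Dn (code M y)) = cell (pp M) y" using cell_eq[OF x(2) code[OF x(2)]] .
  ultimately show "cell (pp M) x = cell (pp M) y" using e by simp
next
  assume "cell (pp M) x = cell (pp M) y"
  then show "code M x = code M y" unfolding code_def by simp
qed

lemma code_close: "x \<in> X \<Longrightarrow> y \<in> X \<Longrightarrow> code M x = code M y \<Longrightarrow> d x y < 1 / real (Suc M)"
proof -
  assume a: "x \<in> X" "y \<in> X" "code M x = code M y"
  then have "cell (pp M) x = cell (pp M) y" using code_iff[OF a(1,2)] by simp
  then have "y \<in> cell (pp M) x" using cell[OF a(2)] by simp
  moreover have "x \<in> cell (pp M) x" "cell (pp M) x \<in> U (pp M)" using cell[OF a(1)] by simp_all
  ultimately show ?thesis using pp(2)[of M "pp M" "cell (pp M) x" x y] by simp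
qed

lemma code_coarse': "N \<le> M \<Longrightarrow> x \<in> X \<Longrightarrow> y \<in> X \<Longrightarrow> code M x = code M y \<Longrightarrow> code N x = code N y"
proof -
  assume a: "N \<le> M" "x \<in> X" "y \<in> X" "code M x = code M y"
  have "cell (pp M) x = cell (pp M) y" using code_iff[OF a(2,3)] a(4) by simp
  then have "cell (pp N) x = cell (pp N) y" using same_coarse[OF pp_mono[OF a(1)] a(2,3)] by simp
  then show ?thesis using code_iff[OF a(2,3)] by simp
qed

lemma code_coarse: "N \<le> M \<Longrightarrow> x \<in> X \<Longrightarrow> code N (Dn (code M x)) = code N x"
proof -
  assume a: "N \<le> M" "x \<in> X"
  have "cell (pp M) (Dn (code M x)) = cell (pp M) x" using cell_eq[OF a(2) code[OF a(2)]] .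
  then have "code M (Dn (code M x)) = code M x" using code_iff[OF Dn(1) a(2)] by simp
  then show ?thesis using code_coarse'[OF a(1) Dn(1) a(2)] by simp
qed

definition "rho n = (SOME \<rho>. \<rho> > 0 \<and> (\<forall>B\<in>U n. \<forall>BB\<in>U n. B \<noteq> BB \<longrightarrow> (\<forall>x\<in>B. \<forall>y\<in>BB. \<rho> \<le> d x y)))"

lemma rho: "rho n > 0" "B \<in> U n \<Longrightarrow> BB \<in> U n \<Longrightarrow> B \<noteq> BB \<Longrightarrow> x \<in> B \<Longrightarrow> y \<in> BB \<Longrightarrow> rho n \<le> d x y"
proof -
  have "\<exists>\<rho>>0. \<forall>B\<in>U n. \<forall>BB\<in>U n. B \<noteq> BB \<longrightarrow> (\<forall>x\<in>B. \<forall>y\<in>BB. \<rho> \<le> d x y)"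
    using tds unfolding tame_defseq_def by blast
  then have "rho n > 0 \<and> (\<forall>B\<in>U n. \<forall>BB\<in>U n. B \<noteq> BB \<longrightarrow> (\<forall>x\<in>B. \<forall>y\<in>BB. rho n \<le> d x y))"
    unfolding rho_def by (rule someI_ex)
  then show "rho n > 0" "B \<in> U n \<Longrightarrow> BB \<in> U n \<Longrightarrow> B \<noteq> BB \<Longrightarrow> x \<in> B \<Longrightarrow> y \<in> BB \<Longrightarrow> rho n \<le> d x y"
    by blast+
qed

lemma code_sep: "x \<in> X \<Longrightarrow> y \<in> X \<Longrightarrow> d x y < rho (pp M) \<Longrightarrow> code M x = code M y"
proof -
  assume a: "x \<in> X" "y \<in> X" "d x y < rho (pp M)"
  have "cell (pp M) x = cell (pp M) y"
  proof (rule ccontr)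
    assume "cell (pp M) x \<noteq> cell (pp M) y"
    then have "rho (pp M) \<le> d x y" using rho(2) cell a by blast
    then show False using a by simp
  qed
  then show ?thesis using code_iff a by blast
qed

definition "Aa M = code M ` X"
definition "Ff M = {(a, b). \<not> (\<exists>x\<in>X. code M x = a \<and> code M (f x) = b)}"
definition "gg M y = (\<lambda>t. code M (Dn (y t)))"
definition "hh x = (\<lambda>M t. code M ((f ^^ t) x))"

abbreviation "YY M \<equiv> one_step_shift (Aa M) (Ff M)"

lemma orbit_in: "x \<in> X \<Longrightarrow> (\<lambda>t. code M ((f ^^ t) x)) \<in> YY M"
  unfolding one_step_shift_def Aa_def Ff_def using fpX by auto

lemma YY_ne: "YY M \<noteq> {}" using orbit_in Xne by blast

lemma YY_D: "y \<in> YY M \<Longrightarrow> \<exists>x\<in>X. code M x = y t \<and> code M (f x) = y (Suc t)"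
  unfolding one_step_shift_def Ff_def by blast

lemma YY_A: "y \<in> YY M \<Longrightarrow> \<exists>x\<in>X. y t = code M x"
  unfolding one_step_shift_def Aa_def by blast

lemma gg_maps: "gg M ` YY (Suc M) \<subseteq> YY M"
proof
  fix v assume "v \<in> gg M ` YY (Suc M)"
  then obtain y where y: "y \<in> YY (Suc M)" "v = gg M y" by blast
  have A: "v t \<in> Aa M" for t
  proof -
    obtain x where "x \<in> X" "y t = code (Suc M) x" using YY_A[OF y(1)] by blast
    then have "v t = code M x" using y(2) code_coarse[of M "Suc M" x] by (simp add: gg_def)
    then show ?thesis using \<open>x \<in> X\<close> by (simp add: Aa_def)
  qed
  have F: "(v t, v (Suc t)) \<notin> Ff M" for t
  proof -
    obtain x where x: "x \<in> X" "code (Suc M) x = y t" "code (Suc M) (f x) = y (Suc t)"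
      using YY_D[OF y(1)] by blast
    have "v t = code M x" using y(2) x code_coarse[of M "Suc M" x] by (simp add: gg_def)
    moreover have "v (Suc t) = code M (f x)" using y(2) x fX' code_coarse[of M "Suc M" "f x"] by (simp add: gg_def)
    ultimately show ?thesis using x(1) by (auto simp: Ff_def)
  qed
  show "v \<in> YY M" unfolding one_step_shift_def using A F by blast
qed

lemma gg_uc: "ucont (YY (Suc M)) shift_dist shift_dist (gg M)"
  unfolding ucont_def
proof (intro allI impI)
  fix e :: real assume "e > 0"
  then obtain K where K: "1 / real (Suc K) < e" by (metis nat_approx_posE)
  show "\<exists>\<delta>>0. \<forall>x\<in>YY (Suc M). \<forall>y\<in>YY (Suc M). shift_dist x y < \<delta> \<longrightarrow> shift_dist (gg M x) (gg M y) < e"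
  proof (intro exI[of _ "1 / real (Suc K)"] conjI ballI impI)
    fix x y assume "shift_dist x y < 1 / real (Suc K)"
    then have "\<forall>i\<le>K. x i = y i" using sd_lt by blast
    then have "\<forall>i\<le>K. gg M x i = gg M y i" by (simp add: gg_def)
    then have "shift_dist (gg M x) (gg M y) < 1 / real (Suc K)" using sd_lt by blast
    then show "shift_dist (gg M x) (gg M y) < e" using K by linarith
  qed simp
qed

lemma gg_cm: "shift_map (gg M y) = gg M (shift_map y)"
  by (simp add: gg_def shift_map_def)

lemma gc_form: "gcomp gg N j y = (\<lambda>t. code N (Dn (y t)))"
proof (induction j arbitrary: y)
  case 0 then show ?case by (simp add: gg_def)
next
  case (Suc j)
  have "gcomp gg N (Suc j) y = gcomp gg N j (gg (N + Suc j) y)" by simp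
  also have "\<dots> = (\<lambda>t. code N (Dn (gg (N + Suc j) y t)))" by (rule Suc.IH)
  also have "\<dots> = (\<lambda>t. code N (Dn (code (N + Suc j) (Dn (y t)))))" by (simp only: gg_def)
  also have "\<dots> = (\<lambda>t. code N (Dn (y t)))" using code_coarse[of N "N + Suc j"] Dn(1) by simp
  finally show ?case .
qed

definition "Orb N = {(\<lambda>t. code N ((f ^^ t) x)) | x. x \<in> X}"

lemma proj_sup: "N \<le> M \<Longrightarrow> Orb N \<subseteq> (\<lambda>y t. code N (Dn (y t))) ` YY M"
proof
  fix v assume a: "N \<le> M" "v \<in> Orb N"
  then obtain x where x: "x \<in> X" "v = (\<lambda>t. code N ((f ^^ t) x))" unfolding Orb_def by blast
  have "(\<lambda>t. code N (Dn ((\<lambda>t. code M ((f ^^ t) x)) t))) = v"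
    using x code_coarse[OF a(1)] fpX by simp
  then show "v \<in> (\<lambda>y t. code N (Dn (y t))) ` YY M" using orbit_in[OF x(1), of M] by (rule image_eqI[OF sym])
qed

lemma proj_sub:
  assumes NM: "N \<le> M" and sh1: "\<forall>xs. (\<forall>n. xs n \<in> X) \<and> (\<forall>n. d (f (xs n)) (xs (Suc n)) < 1 / real (Suc M)) \<longrightarrow>
        (\<exists>x\<in>X. \<forall>n. d ((f ^^ n) x) (xs n) < rho (pp N))"
  shows "(\<lambda>y t. code N (Dn (y t))) ` YY M \<subseteq> Orb N"
proof
  fix v assume "v \<in> (\<lambda>y t. code N (Dn (y t))) ` YY M"
  then obtain y where y: "y \<in> YY M" "v = (\<lambda>t. code N (Dn (y t)))" by blast
  define xs where "xs t = (SOME x. x \<in> X \<and> code M x = y t \<and> code M (f x) = y (Suc t))" for t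
  have xs: "xs t \<in> X \<and> code M (xs t) = y t \<and> code M (f (xs t)) = y (Suc t)" for t
    unfolding xs_def using YY_D[OF y(1), of t] by (rule someI_ex[where P = "\<lambda>x. x \<in> X \<and> code M x = y t \<and> code M (f x) = y (Suc t)", OF bexE]) blast+
  have "d (f (xs n)) (xs (Suc n)) < 1 / real (Suc M)" for n
    using code_close[of "f (xs n)" "xs (Suc n)" M] xs fX' by simp
  then obtain z where z: "z \<in> X" "\<forall>n. d ((f ^^ n) z) (xs n) < rho (pp N)"
    using sh1 xs by blast
  have "v t = code N ((f ^^ t) z)" for t
  proof -
    have "code N ((f ^^ t) z) = code N (xs t)" using code_sep z fpX xs by blast
    moreover have "v t = code N (xs t)" using y(2) xs code_coarse[OF NM, of "xs t"] by metis
    ultimately show ?thesis by simp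
  qed
  then show "v \<in> Orb N" unfolding Orb_def using z(1) by blast
qed

lemma mlcond: "mittag_leffler YY gg"
  unfolding mittag_leffler_def
proof
  fix N
  obtain \<delta> where dl: "\<delta> > 0" "\<forall>xs. (\<forall>n. xs n \<in> X) \<and> (\<forall>n. d (f (xs n)) (xs (Suc n)) < \<delta>) \<longrightarrow>
        (\<exists>x\<in>X. \<forall>n. d ((f ^^ n) x) (xs n) < rho (pp N))"
    using sh rho(1)[of "pp N"] unfolding shadowing_def by blast
  obtain K0 where K0: "1 / real (Suc K0) < \<delta>" using dl(1) by (metis nat_approx_posE)
  define k where "k = max K0 (Suc N)"
  have eq: "(\<lambda>y t. code N (Dn (y t))) ` YY (Suc i) = Orb N" if i: "i \<ge> k" for i
  proof
    have "1 / real (Suc (Suc i)) \<le> 1 / real (Suc K0)" using i by (simp add: k_def frac_le)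
    then have "\<forall>xs. (\<forall>n. xs n \<in> X) \<and> (\<forall>n. d (f (xs n)) (xs (Suc n)) < 1 / real (Suc (Suc i))) \<longrightarrow>
        (\<exists>x\<in>X. \<forall>n. d ((f ^^ n) x) (xs n) < rho (pp N))"
      using dl(2) K0 by (meson le_less_trans less_trans)
    moreover have "N \<le> Suc i" using i by (simp add: k_def)
    ultimately show "(\<lambda>y t. code N (Dn (y t))) ` YY (Suc i) \<subseteq> Orb N" using proj_sub by blast
    show "Orb N \<subseteq> (\<lambda>y t. code N (Dn (y t))) ` YY (Suc i)" using proj_sup \<open>N \<le> Suc i\<close> by blast
  qed
  have gf: "gcomp gg N j = (\<lambda>y t. code N (Dn (y t)))" for j using gc_form by blast
  show "\<exists>k>N. \<forall>i\<ge>k. gcomp gg N (k - N) ` YY (Suc k) = gcomp gg N (i - N) ` YY (Suc i)"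
    unfolding gf using eq by (intro exI[of _ k]) (auto simp: k_def)
qed

end

context DS begin

abbreviation "ILd \<equiv> inv_lim YY gg"

lemma iter_uc: "\<forall>r>0. \<exists>\<delta>>0. \<forall>x\<in>X. \<forall>y\<in>X. d x y < \<delta> \<longrightarrow> (\<forall>t\<le>T. d ((f ^^ t) x) ((f ^^ t) y) < r)"
proof (induction T)
  case 0
  show ?case
  proof (intro allI impI)
    fix r :: real assume r: "r > 0"
    show "\<exists>\<delta>>0. \<forall>x\<in>X. \<forall>y\<in>X. d x y < \<delta> \<longrightarrow> (\<forall>t\<le>0. d ((f ^^ t) x) ((f ^^ t) y) < r)"
      by (rule exI[of _ r]) (use r in simp)
  qed
next
  case (Suc T)
  show ?case
  proof (intro allI impI)
    fix r :: real assume r: "r > 0"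
    obtain \<delta>1 where d1: "\<delta>1 > 0" "\<forall>x\<in>X. \<forall>y\<in>X. d x y < \<delta>1 \<longrightarrow> d (f x) (f y) < r"
      using ucf r unfolding ucont_def by blast
    have "min r \<delta>1 > 0" using r d1 by simp
    then obtain \<delta> where d: "\<delta> > 0" "\<forall>x\<in>X. \<forall>y\<in>X. d x y < \<delta> \<longrightarrow> (\<forall>t\<le>T. d ((f ^^ t) x) ((f ^^ t) y) < min r \<delta>1)"
      using Suc.IH by blast
    show "\<exists>\<delta>>0. \<forall>x\<in>X. \<forall>y\<in>X. d x y < \<delta> \<longrightarrow> (\<forall>t\<le>Suc T. d ((f ^^ t) x) ((f ^^ t) y) < r)"
    proof (intro exI[of _ \<delta>] conjI ballI impI allI)
      show "\<delta> > 0" by (rule d(1))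
      fix x y t assume xy: "x \<in> X" "y \<in> X" "d x y < \<delta>" and t: "t \<le> Suc T"
      show "d ((f ^^ t) x) ((f ^^ t) y) < r"
      proof (cases "t \<le> T")
        case True then show ?thesis using d(2) xy by fastforce
      next
        case False
        then have tt: "t = Suc T" using t by simp
        have "d ((f ^^ T) x) ((f ^^ T) y) < \<delta>1" using d(2) xy by fastforce
        then have "d (f ((f ^^ T) x)) (f ((f ^^ T) y)) < r" using d1(2) fpX xy by blast
        then show ?thesis using tt by simp
      qed
    qed
  qed
qed

lemma hh_in: "x \<in> X \<Longrightarrow> hh x \<in> ILd"
  unfolding inv_lim_def
proof (intro CollectI conjI allI)
  fix m assume x: "x \<in> X"
  show "hh x m \<in> YY m" unfolding hh_def using orbit_in[OF x] .
  show "hh x m = gg m (hh x (Suc m))"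
    unfolding hh_def gg_def using code_coarse[of m "Suc m"] fpX[OF x] by simp
qed

lemma IL_YY: "w \<in> ILd \<Longrightarrow> w m \<in> YY m"
  unfolding inv_lim_def by blast

lemma IL_gg: "w \<in> ILd \<Longrightarrow> w m = gg m (w (Suc m))"
  unfolding inv_lim_def by blast

lemma hh_inj: "inj_on hh X"
proof (rule inj_onI)
  fix x y assume xy: "x \<in> X" "y \<in> X" "hh x = hh y"
  show "x = y"
  proof (rule ccontr)
    assume "x \<noteq> y"
    then have "d x y > 0" using xy by (simp add: order_le_neq_trans)
    then obtain M where M: "1 / real (Suc M) < d x y" by (metis nat_approx_posE)
    have "code M x = code M y" using xy(3) unfolding hh_def by (metis funpow_0)
    then have "d x y < 1 / real (Suc M)" using code_close xy by blast
    then show False using M by linarith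
  qed
qed

lemma point_exists:
  assumes w: "w \<in> ILd"
  shows "\<exists>pt\<in>X. \<forall>m. code m pt = w m t"
proof -
  define z where "z m = Dn (w m t)" for m
  have zX: "z m \<in> X" for m unfolding z_def by (rule Dn(1))
  have a: "code m (z m) = w m t" for m
  proof -
    obtain x' where x': "x' \<in> X" "w m t = code m x'" using YY_A[OF IL_YY[OF w]] by blast
    show ?thesis unfolding z_def x'(2) using code_coarse[OF order_refl x'(1)] .
  qed
  have b: "w m t = code m (z (Suc m))" for m
    using IL_gg[OF w, of m] unfolding z_def gg_def by (metis)
  have c1: "cell (pp m) (z m) = cell (pp m) (z (Suc m))" for m
    using code_iff[OF zX zX] a b by metis
  have c: "m \<le> m' \<Longrightarrow> cell (pp m) (z m) = cell (pp m) (z m')" for m m'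
  proof (induction m' rule: dec_induct)
    case base then show ?case by simp
  next
    case (step k)
    have "cell (pp m) (z k) = cell (pp m) (z (Suc k))"
      using same_coarse[OF pp_mono[OF step.hyps(1)] zX zX c1[of k]] .
    then show ?case using step.IH by simp
  qed
  define V where "V n = cell n (z n)" for n
  have "V n \<in> U n \<and> V (Suc n) \<subseteq> V n" for n
  proof
    show "V n \<in> U n" unfolding V_def using cell[OF zX] by blast
    have "cell (Suc n) (z (Suc n)) \<subseteq> cell n (z (Suc n))" using refine1[OF zX] .
    moreover have "cell n (z (Suc n)) = cell n (z n)"
      using same_coarse[OF pp(1)[of n] zX zX c1[of n]] by simp
    ultimately show "V (Suc n) \<subseteq> V n" unfolding V_def by simp
  qed
  then have "\<Inter> (range V) \<noteq> {}" using cds unfolding complete_defseq_def by blast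
  then obtain pt where pt: "\<forall>n. pt \<in> V n" by blast
  have ptX: "pt \<in> X" using pt cell_X[OF zX] unfolding V_def by blast
  have "code m pt = w m t" for m
  proof -
    have "pt \<in> cell (pp m) (z (pp m))" using pt unfolding V_def by blast
    then have "pt \<in> cell (pp m) (z m)" using c[OF pp(1)[of m]] by simp
    then have "cell (pp m) pt = cell (pp m) (z m)" using cell_eq[OF zX] by blast
    then have "code m pt = code m (z m)" using code_iff[OF ptX zX] by simp
    then show ?thesis using a by simp
  qed
  then show ?thesis using ptX by blast
qed

lemma hh_surj: "w \<in> ILd \<Longrightarrow> \<exists>x\<in>X. hh x = w"
proof -
  assume w: "w \<in> ILd"
  define xt where "xt t = (SOME pt. pt \<in> X \<and> (\<forall>m. code m pt = w m t))" for t
  have xt: "xt t \<in> X \<and> (\<forall>m. code m (xt t) = w m t)" for t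
  proof -
    obtain pt where "pt \<in> X" "\<forall>m. code m pt = w m t" using point_exists[OF w] by blast
    then show ?thesis unfolding xt_def by (intro someI[where P = "\<lambda>pt. pt \<in> X \<and> (\<forall>m. code m pt = w m t)"]) blast
  qed
  have fx: "f (xt t) = xt (Suc t)" for t
  proof (rule ccontr)
    assume ne: "f (xt t) \<noteq> xt (Suc t)"
    have X1: "f (xt t) \<in> X" "xt (Suc t) \<in> X" "xt t \<in> X" using xt fX' by blast+
    define r where "r = d (f (xt t)) (xt (Suc t))"
    have r: "r > 0" using ne X1 unfolding r_def by (simp add: order_le_neq_trans)
    then have r2: "r / 2 > 0" by simp
    obtain \<delta> where dl: "\<delta> > 0" "\<forall>x\<in>X. \<forall>y\<in>X. d x y < \<delta> \<longrightarrow> d (f x) (f y) < r / 2"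
      using ucf r2 unfolding ucont_def by blast
    have "min \<delta> (r / 2) > 0" using dl r2 by simp
    then obtain m where m: "1 / real (Suc m) < min \<delta> (r / 2)" by (metis nat_approx_posE)
    obtain a where a: "a \<in> X" "code m a = w m t" "code m (f a) = w m (Suc t)"
      using YY_D[OF IL_YY[OF w]] by blast
    have "code m a = code m (xt t)" using a xt by simp
    then have "d a (xt t) < 1 / real (Suc m)" using code_close a(1) X1 by blast
    then have "d (f a) (f (xt t)) < r / 2" using dl(2) a(1) X1 m by simp
    moreover have "code m (f a) = code m (xt (Suc t))" using a xt by simp
    then have "d (f a) (xt (Suc t)) < 1 / real (Suc m)" using code_close fX' a(1) X1 by blast
    moreover have "d (f (xt t)) (xt (Suc t)) \<le> d (f (xt t)) (f a) + d (f a) (xt (Suc t))"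
      using triangle X1 fX' a(1) by blast
    moreover have "d (f (xt t)) (f a) = d (f a) (f (xt t))" by (rule commute)
    ultimately have "r < r / 2 + r / 2" using m unfolding r_def by linarith
    then show False by simp
  qed
  have orb: "(f ^^ t) (xt 0) = xt t" for t
    by (induction t) (auto simp: fx)
  have "hh (xt 0) = w"
    unfolding hh_def orb using xt by (intro ext) simp
  then show ?thesis using xt by blast
qed

lemma hh_bij: "bij_betw hh X ILd"
  unfolding bij_betw_def
proof
  show "inj_on hh X" by (rule hh_inj)
  show "hh ` X = ILd"
  proof
    show "hh ` X \<subseteq> ILd" using hh_in by blast
    show "ILd \<subseteq> hh ` X" using hh_surj by blast
  qed
qed

lemma hh_uc: "ucont X d (inv_lim_dist (\<lambda>m. shift_dist)) hh"
  unfolding ucont_def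
proof (intro allI impI)
  fix e :: real assume e: "e > 0"
  then obtain K where K: "1 / real (Suc K) < e" by (metis nat_approx_posE)
  obtain \<delta> where dl: "\<delta> > 0" "\<forall>x\<in>X. \<forall>y\<in>X. d x y < \<delta> \<longrightarrow> (\<forall>t\<le>K. d ((f ^^ t) x) ((f ^^ t) y) < rho (pp K))"
    using iter_uc[of K] rho(1)[of "pp K"] by blast
  show "\<exists>\<delta>>0. \<forall>x\<in>X. \<forall>y\<in>X. d x y < \<delta> \<longrightarrow> inv_lim_dist (\<lambda>m. shift_dist) (hh x) (hh y) < e"
  proof (intro exI[of _ \<delta>] conjI ballI impI)
    show "\<delta> > 0" by (rule dl(1))
    fix x y assume xy: "x \<in> X" "y \<in> X" "d x y < \<delta>"
    have "inv_lim_dist (\<lambda>m. shift_dist) (hh x) (hh y) \<le> 1 / real (Suc K)"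
    proof (rule ild_small)
      fix m assume m: "m \<le> K"
      show "\<forall>i\<le>K. hh x m i = hh y m i"
      proof (intro allI impI)
        fix i assume i: "i \<le> K"
        have "d ((f ^^ i) x) ((f ^^ i) y) < rho (pp K)" using dl(2) xy i by blast
        then have "code K ((f ^^ i) x) = code K ((f ^^ i) y)" using code_sep fpX xy by blast
        then have "code m ((f ^^ i) x) = code m ((f ^^ i) y)" using code_coarse'[OF m] fpX xy by blast
        then show "hh x m i = hh y m i" unfolding hh_def by simp
      qed
    qed
    then show "inv_lim_dist (\<lambda>m. shift_dist) (hh x) (hh y) < e" using K by linarith
  qed
qed

lemma inv_uc: "ucont ILd (inv_lim_dist (\<lambda>m. shift_dist)) d (inv_into X hh)"
  unfolding ucont_def
proof (intro allI impI)
  fix e :: real assume e: "e > 0"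
  then obtain M where M: "1 / real (Suc M) < e" by (metis nat_approx_posE)
  show "\<exists>\<delta>>0. \<forall>x\<in>ILd. \<forall>y\<in>ILd. inv_lim_dist (\<lambda>m. shift_dist) x y < \<delta> \<longrightarrow> d (inv_into X hh x) (inv_into X hh y) < e"
  proof (intro exI[of _ "1 / real (Suc M)"] conjI ballI impI)
    show "1 / real (Suc M) > 0" by simp
    fix w1 w2 assume w: "w1 \<in> ILd" "w2 \<in> ILd" "inv_lim_dist (\<lambda>m. shift_dist) w1 w2 < 1 / real (Suc M)"
    have img: "hh ` X = ILd" using hh_bij unfolding bij_betw_def by blast
    define x1 where "x1 = inv_into X hh w1"
    define x2 where "x2 = inv_into X hh w2"
    have x1: "x1 \<in> X" "hh x1 = w1" unfolding x1_def using w(1) img by (auto intro: inv_into_into f_inv_into_f)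
    have x2: "x2 \<in> X" "hh x2 = w2" unfolding x2_def using w(2) img by (auto intro: inv_into_into f_inv_into_f)
    have "shift_dist (w1 M) (w2 M) / real (Suc M) < 1 / real (Suc M)"
      using ild_term_le[of w1 M w2] w(3) by linarith
    then have "shift_dist (w1 M) (w2 M) < 1 / real (Suc 0)" by (simp add: divide_less_cancel)
    then have "w1 M 0 = w2 M 0" using sd_lt_agree by blast
    then have "code M x1 = code M x2" using x1 x2 unfolding hh_def by (metis funpow_0)
    then have "d x1 x2 < 1 / real (Suc M)" using code_close x1 x2 by blast
    then show "d (inv_into X hh w1) (inv_into X hh w2) < e" using M unfolding x1_def x2_def by linarith
  qed
qed

lemma hh_conj: "x \<in> X \<Longrightarrow> hh (f x) = inv_lim_map (\<lambda>m. shift_map) (hh x)"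
  unfolding hh_def inv_lim_map_def shift_map_def by (simp add: funpow_Suc_right del: funpow.simps)

lemma the_conj: "unif_conj X d f ILd (inv_lim_dist (\<lambda>m. shift_dist)) (inv_lim_map (\<lambda>m. shift_map))"
  unfolding unif_conj_def using hh_bij hh_uc inv_uc hh_conj by blast

end

theorem corollary4p17:
  fixes X :: "'a set" and d :: "'a \<Rightarrow> 'a \<Rightarrow> real" and f :: "'a \<Rightarrow> 'a"
    and \<U> :: "nat \<Rightarrow> 'a set set"
  assumes "dyn_sys X d f"
    and "f ` X \<subseteq> X"
    and "ucont X d d f"
    and "defining_sequence X d \<U>"
    and "complete_defseq \<U>"
    and "tame_defseq d \<U>"
  shows "shadowing X d f \<longleftrightarrow>
    (\<exists>(A :: nat \<Rightarrow> nat set) (F :: nat \<Rightarrow> (nat \<times> nat) set) (g :: nat \<Rightarrow> (nat \<Rightarrow> nat) \<Rightarrow> (nat \<Rightarrow> nat)).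
       (\<forall>m. one_step_shift (A m) (F m) \<noteq> {}) \<and>
       (\<forall>m. g m ` one_step_shift (A (Suc m)) (F (Suc m)) \<subseteq> one_step_shift (A m) (F m)) \<and>
       (\<forall>m. ucont (one_step_shift (A (Suc m)) (F (Suc m))) shift_dist shift_dist (g m)) \<and>
       (\<forall>m. \<forall>y\<in>one_step_shift (A (Suc m)) (F (Suc m)). shift_map (g m y) = g m (shift_map y)) \<and>
       mittag_leffler (\<lambda>m. one_step_shift (A m) (F m)) g \<and>
       unif_conj X d f
         (inv_lim (\<lambda>m. one_step_shift (A m) (F m)) g)
         (inv_lim_dist (\<lambda>m. shift_dist))
         (inv_lim_map (\<lambda>m. shift_map)))"
  proof
  assume sh: "shadowing X d f"
  have dsys: "Metric_space X d" "X \<noteq> {}" "separable_space (Metric_space.mtopology X d)"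
    using assms(1) unfolding dyn_sys_def by blast+
  interpret DS X d f \<U>
  proof (rule DS.intro[OF dsys(1)], rule DS_axioms.intro)
    show "X \<noteq> {}" by (rule dsys(2))
    show "separable_space (Metric_space.mtopology X d)" by (rule dsys(3))
  qed (use assms sh in blast)+
  show "\<exists>A F g. (\<forall>m. one_step_shift (A m) (F m) \<noteq> {}) \<and>
       (\<forall>m. g m ` one_step_shift (A (Suc m)) (F (Suc m)) \<subseteq> one_step_shift (A m) (F m)) \<and>
       (\<forall>m. ucont (one_step_shift (A (Suc m)) (F (Suc m))) shift_dist shift_dist (g m)) \<and>
       (\<forall>m. \<forall>y\<in>one_step_shift (A (Suc m)) (F (Suc m)). shift_map (g m y) = g m (shift_map y)) \<and>
       mittag_leffler (\<lambda>m. one_step_shift (A m) (F m)) g \<and>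
       unif_conj X d f
         (inv_lim (\<lambda>m. one_step_shift (A m) (F m)) g)
         (inv_lim_dist (\<lambda>m. shift_dist))
         (inv_lim_map (\<lambda>m. shift_map))"
  proof (intro exI[of _ Aa] exI[of _ Ff] exI[of _ gg] conjI allI ballI)
    fix m
    show "YY m \<noteq> {}" by (rule YY_ne)
    show "gg m ` YY (Suc m) \<subseteq> YY m" by (rule gg_maps)
    show "ucont (YY (Suc m)) shift_dist shift_dist (gg m)" by (rule gg_uc)
    fix y show "shift_map (gg m y) = gg m (shift_map y)" by (rule gg_cm)
  next
    show "mittag_leffler YY gg" by (rule mlcond)
    show "unif_conj X d f ILd (inv_lim_dist (\<lambda>m. shift_dist)) (inv_lim_map (\<lambda>m. shift_map))"
      by (rule the_conj)
  qed
next
  assume "\<exists>A F g. (\<forall>m. one_step_shift (A m) (F m) \<noteq> {}) \<and>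
       (\<forall>m. g m ` one_step_shift (A (Suc m)) (F (Suc m)) \<subseteq> one_step_shift (A m) (F m)) \<and>
       (\<forall>m. ucont (one_step_shift (A (Suc m)) (F (Suc m))) shift_dist shift_dist (g m)) \<and>
       (\<forall>m. \<forall>y\<in>one_step_shift (A (Suc m)) (F (Suc m)). shift_map (g m y) = g m (shift_map y)) \<and>
       mittag_leffler (\<lambda>m. one_step_shift (A m) (F m)) g \<and>
       unif_conj X d f
         (inv_lim (\<lambda>m. one_step_shift (A m) (F m)) g)
         (inv_lim_dist (\<lambda>m. shift_dist))
         (inv_lim_map (\<lambda>m. shift_map))"
  then obtain A F g where
       h2: "\<forall>m. g m ` one_step_shift (A (Suc m)) (F (Suc m)) \<subseteq> one_step_shift (A m) (F m)" and
       h3: "\<forall>m. ucont (one_step_shift (A (Suc m)) (F (Suc m))) shift_dist shift_dist (g m)" and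
       h4: "\<forall>m. \<forall>y\<in>one_step_shift (A (Suc m)) (F (Suc m)). shift_map (g m y) = g m (shift_map y)" and
       h5: "mittag_leffler (\<lambda>m. one_step_shift (A m) (F m)) g" and
       h6: "unif_conj X d f
         (inv_lim (\<lambda>m. one_step_shift (A m) (F m)) g)
         (inv_lim_dist (\<lambda>m. shift_dist))
         (inv_lim_map (\<lambda>m. shift_map))"
    by blast
  interpret ILS A F g
    by (rule ILS.intro) (use h2 h3 h4 h5 in blast)+
  show "shadowing X d f"
    by (rule transport_shadowing[OF h6 assms(2) IL_shadowing])
qed

end
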